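(* For $t\geq 2$, let $F_{2,t}(k)=1$ if $2\leq k\leq t+1$ and $F_{2,t}(k)=0$ otherwise. For $s\geq 3$ and $t\geq 2$, define $F_{s,t}(k)$ recursively by \[F_{s,t}(k)=\begin{cases} \displaystyle\sum_{i=s-1}^{k-1}F_{s-1,t}(i)\sum_{j=\max\{0,\,k-(s-2)t-2\}}^{t-1}\binom{k-i-1}{j}, & \text{if } s\leq k\leq(s-1)t+1; \\ 0, & \text{otherwise.} \end{cases}\] Then for all $s\ge2$ and $t\ge 2$, \[A_{321}(K_{s,t}^\beta)=\sum_{k=s}^{(s-1)t+1}\binom{st-k}{t-1}F_{s,t}(k).\]
   Context: The comb $K_{s,t}$ has elements $e_{i,j}$, $1\le i\le s$, $1\le j\le t$, with partial order generated by the covers $e_{i,1}\lessdot e_{i+1,1}$ ($1\le i\le s-1$) and $e_{i,j}\lessdot e_{i,j+1}$ ($1\le j\le t-1$). $K^\beta_{s,t}$ is the labeled poset on $[st]$ obtained by giving $e_{i,j}$ the label $(i-1)t+j$. A linear extension is a permutation of $[st]$ in which $x$ precedes $y$ whenever $x<y$ in the poset; $A_{321}(P)$ is the number of linear extensions of $P$ avoiding the pattern $321$. *)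

theory Defs
  imports Main
begin

definition comb_elems :: "nat \<Rightarrow> nat \<Rightarrow> (nat \<times> nat) set" where
  "comb_elems s t = {(i, j). 1 \<le> i \<and> i \<le> s \<and> 1 \<le> j \<and> j \<le> t}"

definition comb_cover :: "nat \<Rightarrow> nat \<Rightarrow> nat \<times> nat \<Rightarrow> nat \<times> nat \<Rightarrow> bool" where
  "comb_cover s t x y \<longleftrightarrow>
     x \<in> comb_elems s t \<and> y \<in> comb_elems s t \<and>
     ((snd x = 1 \<and> snd y = 1 \<and> fst y = fst x + 1) \<or>
      (fst y = fst x \<and> snd y = snd x + 1))"

definition comb_less :: "nat \<Rightarrow> nat \<Rightarrow> nat \<times> nat \<Rightarrow> nat \<times> nat \<Rightarrow> bool" where
  "comb_less s t = tranclp (comb_cover s t)"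

definition comb_label :: "nat \<Rightarrow> nat \<times> nat \<Rightarrow> nat" where
  "comb_label t e = (fst e - 1) * t + snd e"

definition combB_less :: "nat \<Rightarrow> nat \<Rightarrow> nat \<Rightarrow> nat \<Rightarrow> bool" where
  "combB_less s t x y \<longleftrightarrow>
     (\<exists>a b. comb_less s t a b \<and> comb_label t a = x \<and> comb_label t b = y)"

definition lin_ext_combB :: "nat \<Rightarrow> nat \<Rightarrow> nat list set" where
  "lin_ext_combB s t = {\<sigma>. distinct \<sigma> \<and> set \<sigma> = {1..s * t} \<and>
     (\<forall>p q. p < length \<sigma> \<and> q < length \<sigma> \<and> combB_less s t (\<sigma> ! p) (\<sigma> ! q) \<longrightarrow> p < q)}"

definition avoids_321 :: "nat list \<Rightarrow> bool" where
  "avoids_321 \<sigma> \<longleftrightarrow>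
     \<not> (\<exists>a b c. a < b \<and> b < c \<and> c < length \<sigma> \<and> \<sigma> ! a > \<sigma> ! b \<and> \<sigma> ! b > \<sigma> ! c)"

definition A321_combB :: "nat \<Rightarrow> nat \<Rightarrow> nat" where
  "A321_combB s t = card {\<sigma> \<in> lin_ext_combB s t. avoids_321 \<sigma>}"

text \<open>F_{s,t}(k); only meaningful for s >= 2 (values for s < 2 are set to 0).
  In the inner sum, the nat subtraction k - (s-2)t - 2 truncates at 0, which is
  exactly max{0, k-(s-2)t-2}.\<close>

fun F :: "nat \<Rightarrow> nat \<Rightarrow> nat \<Rightarrow> nat" where
  "F 0 t k = 0"
| "F (Suc 0) t k = 0"
| "F (Suc (Suc 0)) t k = (if 2 \<le> k \<and> k \<le> t + 1 then 1 else 0)"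
| "F (Suc (Suc (Suc n))) t k =
     (let s = n + 3 in
      if s \<le> k \<and> k \<le> (s - 1) * t + 1 then
        (\<Sum>i = s - 1..k - 1. F (Suc (Suc n)) t i *
           (\<Sum>j = nat (max 0 (int k - int ((s - 2) * t) - 2))..t - 1. (k - i - 1) choose j))
      else 0)"

end

theory Submission
  imports Defs
begin

definition Rl :: "nat \<Rightarrow> nat \<Rightarrow> nat \<Rightarrow> nat \<Rightarrow> bool" where
  "Rl s t x y \<longleftrightarrow> 1 \<le> x \<and> x < y \<and> y \<le> s*t \<and> ((x-1) div t = (y-1) div t \<or> (x-1) mod t = 0)"

definition Qc :: "nat \<Rightarrow> nat \<Rightarrow> nat \<times> nat \<Rightarrow> nat \<times> nat \<Rightarrow> bool" where
  "Qc s t a b \<longleftrightarrow> a \<in> comb_elems s t \<and> b \<in> comb_elems s t \<and>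
     ((fst a = fst b \<and> snd a < snd b) \<or> (snd a = 1 \<and> fst a < fst b))"

lemma Qc_step: assumes "Qc s t a y" "comb_cover s t y z" shows "Qc s t a z"
proof -
  obtain a1 a2 y1 y2 z1 z2 where e: "a = (a1,a2)" "y = (y1,y2)" "z = (z1,z2)" by (cases a, cases y, cases z)
  have z: "z \<in> comb_elems s t" using assms(2) by (simp add: comb_cover_def)
  have a: "a \<in> comb_elems s t" "1 \<le> a2" using assms(1) e by (auto simp: Qc_def comb_elems_def)
  have "(a1 = y1 \<and> a2 < y2) \<or> (a2 = 1 \<and> a1 < y1)" using assms(1) e by (simp add: Qc_def)
  moreover have "(y2 = 1 \<and> z2 = 1 \<and> z1 = y1 + 1) \<or> (z1 = y1 \<and> z2 = y2 + 1)" using assms(2) e by (simp add: comb_cover_def)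
  ultimately have "(a1 = z1 \<and> a2 < z2) \<or> (a2 = 1 \<and> a1 < z1)" using a by auto
  then show ?thesis using a z e by (simp add: Qc_def)
qed

lemma comb_less_Qc: "comb_less s t a b \<Longrightarrow> Qc s t a b"
  unfolding comb_less_def
proof (induction rule: tranclp_induct)
  case (base y) then show ?case by (auto simp: comb_cover_def Qc_def comb_elems_def)
next
  case (step y z)
  from step.IH step.hyps(2) show ?case by (rule Qc_step)
qed

lemma row_path: "(i,j) \<in> comb_elems s t \<Longrightarrow> (i, j+d+1) \<in> comb_elems s t \<Longrightarrow>
   tranclp (comb_cover s t) (i,j) (i,j+d+1)"
proof (induction d)
  case 0 then show ?case by (auto simp: comb_cover_def)
next
  case (Suc d)
  have m: "(i, j+d+1) \<in> comb_elems s t" using Suc.prems by (auto simp: comb_elems_def)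
  have "comb_cover s t (i, j+d+1) (i, j + Suc d + 1)" using m Suc.prems by (auto simp: comb_cover_def)
  then show ?case using Suc.IH[OF Suc.prems(1) m] by (simp add: tranclp.trancl_into_trancl)
qed

lemma col_path: "1 \<le> t \<Longrightarrow> 1 \<le> i \<Longrightarrow> i + d + 1 \<le> s \<Longrightarrow>
   tranclp (comb_cover s t) (i,1) (i+d+1,1)"
proof (induction d)
  case 0 then show ?case by (auto simp: comb_cover_def comb_elems_def)
next
  case (Suc d)
  have "comb_cover s t (i+d+1, 1) (i + Suc d + 1, 1)" using Suc.prems by (auto simp: comb_cover_def comb_elems_def)
  then show ?case using Suc by (simp add: tranclp.trancl_into_trancl)
qed

lemma Qc_comb_less: assumes "1 \<le> t" "Qc s t a b" shows "comb_less s t a b"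
proof -
  obtain i j i' j' where a: "a = (i,j)" and b: "b = (i',j')" by (cases a, cases b)
  show ?thesis
  proof (cases "i = i' \<and> j < j'")
    case True
    then obtain d where "j' = j + d + 1" by (metis add.commute add_Suc less_iff_Suc_add plus_1_eq_Suc)
    then show ?thesis using assms True a b row_path[of i j s t d] by (auto simp: Qc_def comb_less_def)
  next
    case False
    then have h: "j = 1" "i < i'" using assms a b by (auto simp: Qc_def)
    then obtain d where d: "i' = i + d + 1" by (metis add.commute add_Suc less_iff_Suc_add plus_1_eq_Suc)
    have c1: "tranclp (comb_cover s t) (i,1) (i',1)" using col_path[of t i d s] assms a b h d
      by (auto simp: Qc_def comb_elems_def)
    show ?thesis
    proof (cases "j' = 1")
      case True then show ?thesis using c1 h a b by (simp add: comb_less_def)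
    next
      case False
      define e where "e = j' - 2"
      have e: "j' = 1 + e + 1" using assms b False unfolding e_def by (auto simp: Qc_def comb_elems_def)
      have "tranclp (comb_cover s t) (i',1) (i',1+e+1)"
        by (rule row_path) (use assms b e in \<open>auto simp: Qc_def comb_elems_def\<close>)
      then show ?thesis using c1 h a b e by (simp add: comb_less_def)
    qed
  qed
qed

lemma label_div: "1 \<le> j \<Longrightarrow> j \<le> t \<Longrightarrow> (comb_label t (i,j) - 1) div t = i - 1"
  and label_mod: "1 \<le> j \<Longrightarrow> j \<le> t \<Longrightarrow> (comb_label t (i,j) - 1) mod t = j - 1"
proof -
  assume "1 \<le> j" "j \<le> t"
  then have e: "comb_label t (i,j) - 1 = (j-1) + (i-1)*t" by (simp add: comb_label_def)
  have t: "t > 0" "j - 1 < t" using \<open>1 \<le> j\<close> \<open>j \<le> t\<close> by auto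
  show "(comb_label t (i,j) - 1) div t = i - 1" unfolding e using t by simp
  show "(comb_label t (i,j) - 1) mod t = j - 1" unfolding e using t by simp
qed

lemma label_inv: "1 \<le> x \<Longrightarrow> 0 < t \<Longrightarrow> comb_label t ((x-1) div t + 1, (x-1) mod t + 1) = x"
  unfolding comb_label_def by simp

lemma combB_less_iff: assumes "1 \<le> t" shows "combB_less s t x y \<longleftrightarrow> Rl s t x y"
proof
  assume "combB_less s t x y"
  then obtain a b where ab: "comb_less s t a b" "comb_label t a = x" "comb_label t b = y"
    by (auto simp: combB_less_def)
  obtain i j i' j' where a: "a = (i,j)" and b: "b = (i',j')" by (cases a, cases b)
  have q: "Qc s t (i,j) (i',j')" using comb_less_Qc ab a b by simp
  have r: "1 \<le> i" "i \<le> s" "1 \<le> j" "j \<le> t" "1 \<le> i'" "i' \<le> s" "1 \<le> j'" "j' \<le> t"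
    using q by (auto simp: Qc_def comb_elems_def)
  have x: "x = (i-1)*t + j" and y: "y = (i'-1)*t+j'" using ab a b by (auto simp: comb_label_def)
  have "y \<le> s * t"
  proof -
    have "(i'-1)*t + j' \<le> (i'-1)*t + t" using r by simp
    also have "\<dots> = i' * t" using r by (cases i') auto
    also have "\<dots> \<le> s * t" using r by simp
    finally show ?thesis using y by simp
  qed
  moreover have "x < y"
  proof (cases "i = i'")
    case True then show ?thesis using q x y by (auto simp: Qc_def)
  next
    case False
    then have "j = 1" "i < i'" using q by (auto simp: Qc_def)
    then have "(i-1)*t + t \<le> (i'-1)*t" using r
      by (metis Suc_diff_1 Suc_leI diff_less_mono less_imp_le_nat mult_Suc mult_le_mono1 add.commute \<open>1 \<le> i\<close> order.strict_trans1 diff_le_mono)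
    then show ?thesis using x y \<open>j = 1\<close> r by linarith
  qed
  moreover have "(x-1) div t = (y-1) div t \<or> (x-1) mod t = 0"
    using q label_div[of j t i] label_div[of j' t i'] label_mod[of j t i] r ab a b
    by (auto simp: Qc_def)
  ultimately show "Rl s t x y" using x r by (simp add: Rl_def)
next
  assume R: "Rl s t x y"
  define a where "a = ((x-1) div t + 1, (x-1) mod t + 1)"
  define b where "b = ((y-1) div t + 1, (y-1) mod t + 1)"
  have la: "comb_label t a = x" using R assms unfolding a_def Rl_def by (intro label_inv) auto
  have lb: "comb_label t b = y" using R assms unfolding b_def Rl_def by (intro label_inv) auto
  have "y - 1 < s * t" using R unfolding Rl_def by linarith
  then have yl: "(y-1) div t < s" by (rule less_mult_imp_div_less)
  have "x - 1 \<le> y - 1" using R unfolding Rl_def by linarith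
  then have xl: "(x-1) div t \<le> (y-1) div t" by (rule div_le_mono)
  have m1: "Suc ((x-1) mod t) \<le> t" "Suc ((y-1) mod t) \<le> t" using assms by (auto intro: Suc_leI)
  have ea: "a \<in> comb_elems s t" using yl xl m1 by (auto simp: a_def comb_elems_def)
  have eb: "b \<in> comb_elems s t" using yl m1 by (auto simp: b_def comb_elems_def)
  have "Qc s t a b"
  proof (cases "(x-1) div t = (y-1) div t")
    case True
    have "x - 1 < y - 1" using R unfolding Rl_def by linarith
    then have "(x-1) mod t < (y-1) mod t" using True
      by (metis div_mult_mod_eq nat_add_left_cancel_less)
    then show ?thesis using ea eb True by (simp add: Qc_def a_def b_def)
  next
    case False
    then have "(x-1) mod t = 0" using R by (simp add: Rl_def)
    then show ?thesis using ea eb False xl by (simp add: Qc_def a_def b_def)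
  qed
  then have "comb_less s t a b" using Qc_comb_less[OF assms] by blast
  then show "combB_less s t x y" using la lb unfolding combB_less_def by blast
qed

fun bef :: "'a list \<Rightarrow> 'a \<Rightarrow> 'a \<Rightarrow> bool" where
  "bef [] x y = False"
| "bef (a#l) x y = ((a = x \<and> y \<in> set l) \<or> bef l x y)"

lemma bef_set: "bef l x y \<Longrightarrow> x \<in> set l \<and> y \<in> set l"
  by (induction l) auto

lemma bef_nth: "bef l x y \<longleftrightarrow> (\<exists>i j. i < j \<and> j < length l \<and> l!i = x \<and> l!j = y)"
proof (induction l)
  case Nil then show ?case by simp
next
  case (Cons a l)
  show ?case
  proof
    assume "bef (a#l) x y"
    then consider "a = x" "y \<in> set l" | "bef l x y" by auto
    then show "\<exists>i j. i < j \<and> j < length (a#l) \<and> (a#l)!i = x \<and> (a#l)!j = y"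
    proof cases
      case 1
      then obtain j where "j < length l" "l!j = y" by (auto simp: in_set_conv_nth)
      then show ?thesis using 1 by (intro exI[of _ 0] exI[of _ "Suc j"]) auto
    next
      case 2
      then obtain i j where "i < j \<and> j < length l \<and> l!i = x \<and> l!j = y" using Cons.IH by auto
      then show ?thesis by (intro exI[of _ "Suc i"] exI[of _ "Suc j"]) auto
    qed
  next
    assume "\<exists>i j. i < j \<and> j < length (a#l) \<and> (a#l)!i = x \<and> (a#l)!j = y"
    then obtain i j where h: "i < j" "j < length (a#l)" "(a#l)!i = x" "(a#l)!j = y" by blast
    obtain j' where j: "j = Suc j'" using h(1) by (cases j) auto
    show "bef (a#l) x y"
    proof (cases i)
      case 0
      then have "a = x" "y \<in> set l" using h j by auto
      then show ?thesis by simp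
    next
      case (Suc i')
      then have "bef l x y" using Cons.IH h j by auto
      then show ?thesis by simp
    qed
  qed
qed

lemma bef_filter: "bef (filter P l) x y \<longleftrightarrow> bef l x y \<and> P x \<and> P y"
  by (induction l) (auto dest: bef_set)

lemma bef_append: "bef (l1 @ l2) x y \<longleftrightarrow> bef l1 x y \<or> (x \<in> set l1 \<and> y \<in> set l2) \<or> bef l2 x y"
  by (induction l1) (auto dest: bef_set)

lemma bef_trans: "distinct l \<Longrightarrow> bef l x y \<Longrightarrow> bef l y z \<Longrightarrow> bef l x z"
  by (induction l) (auto dest: bef_set)

lemma bef_asym: "distinct l \<Longrightarrow> bef l x y \<Longrightarrow> \<not> bef l y x"
  by (induction l) (auto dest: bef_set)

lemma bef_irrefl: "distinct l \<Longrightarrow> \<not> bef l x x"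
  by (induction l) (auto dest: bef_set)

lemma bef_total: "x \<in> set l \<Longrightarrow> y \<in> set l \<Longrightarrow> x \<noteq> y \<Longrightarrow> bef l x y \<or> bef l y x"
  by (induction l) auto

lemma sorted_bef: "sorted_wrt (<) (l::nat list) \<Longrightarrow> x \<in> set l \<Longrightarrow> y \<in> set l \<Longrightarrow> x < y \<Longrightarrow> bef l x y"
  by (induction l) auto

lemma bef_sorted_less: "sorted_wrt (<) (l::nat list) \<Longrightarrow> bef l x y \<Longrightarrow> x < y"
  by (induction l) (auto dest: bef_set)

lemma bef_sorted_le: "sorted (l::nat list) \<Longrightarrow> bef l x y \<Longrightarrow> x \<le> y"
  by (induction l) (auto dest: bef_set)

lemma bef_imp_sorted: "(\<And>x y. bef l x y \<Longrightarrow> x < y) \<Longrightarrow> sorted_wrt (<) (l::nat list)"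
  by (induction l) auto

lemma bef_take: "distinct l \<Longrightarrow> bef l x y \<Longrightarrow> y \<in> set (take p l) \<Longrightarrow> x \<in> set (take p l)"
proof -
  assume d: "distinct l" and b: "bef l x y" and y: "y \<in> set (take p l)"
  have "bef (take p l @ drop p l) x y" using b by simp
  then have "bef (take p l) x y \<or> x \<in> set (take p l) \<or> bef (drop p l) x y"
    unfolding bef_append by blast
  moreover have "y \<notin> set (drop p l)" using d y
    by (metis append_take_drop_id disjoint_iff distinct_append)
  ultimately show ?thesis by (auto dest: bef_set)
qed

lemma lin_ext_iff:
  assumes "1 \<le> t"
  shows "\<sigma> \<in> lin_ext_combB s t \<longleftrightarrow> distinct \<sigma> \<and> set \<sigma> = {1..s*t} \<and>
     (\<forall>x y. Rl s t x y \<longrightarrow> x \<in> set \<sigma> \<longrightarrow> y \<in> set \<sigma> \<longrightarrow> bef \<sigma> x y)"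
proof -
  have iff: "(\<forall>p q. p < length \<sigma> \<and> q < length \<sigma> \<and> Rl s t (\<sigma> ! p) (\<sigma> ! q) \<longrightarrow> p < q) \<longleftrightarrow>
      (\<forall>x y. Rl s t x y \<longrightarrow> x \<in> set \<sigma> \<longrightarrow> y \<in> set \<sigma> \<longrightarrow> bef \<sigma> x y)" if d: "distinct \<sigma>"
  proof
    assume H: "\<forall>p q. p < length \<sigma> \<and> q < length \<sigma> \<and> Rl s t (\<sigma> ! p) (\<sigma> ! q) \<longrightarrow> p < q"
    show "\<forall>x y. Rl s t x y \<longrightarrow> x \<in> set \<sigma> \<longrightarrow> y \<in> set \<sigma> \<longrightarrow> bef \<sigma> x y"
    proof (intro allI impI)
      fix x y assume R: "Rl s t x y" and x: "x \<in> set \<sigma>" and y: "y \<in> set \<sigma>"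
      obtain i where i: "i < length \<sigma>" "\<sigma>!i = x" using x by (auto simp: in_set_conv_nth)
      obtain j where j: "j < length \<sigma>" "\<sigma>!j = y" using y by (auto simp: in_set_conv_nth)
      have "i < j" using H i j R by auto
      then show "bef \<sigma> x y" unfolding bef_nth using i j by blast
    qed
  next
    assume H: "\<forall>x y. Rl s t x y \<longrightarrow> x \<in> set \<sigma> \<longrightarrow> y \<in> set \<sigma> \<longrightarrow> bef \<sigma> x y"
    show "\<forall>p q. p < length \<sigma> \<and> q < length \<sigma> \<and> Rl s t (\<sigma> ! p) (\<sigma> ! q) \<longrightarrow> p < q"
    proof (intro allI impI)
      fix p q assume a: "p < length \<sigma> \<and> q < length \<sigma> \<and> Rl s t (\<sigma> ! p) (\<sigma> ! q)"
      then have "bef \<sigma> (\<sigma>!p) (\<sigma>!q)" using H by auto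
      then obtain i j where ij: "i < j" "j < length \<sigma>" "\<sigma>!i = \<sigma>!p" "\<sigma>!j = \<sigma>!q"
        unfolding bef_nth by blast
      have "i = p" using ij a d nth_eq_iff_index_eq by (metis order.strict_trans)
      moreover have "j = q" using ij a d nth_eq_iff_index_eq by metis
      ultimately show "p < q" using ij by simp
    qed
  qed
  show ?thesis unfolding lin_ext_combB_def combB_less_iff[OF assms] using iff by blast
qed

lemma avoids_iff:
  assumes "distinct \<sigma>"
  shows "avoids_321 \<sigma> \<longleftrightarrow> \<not> (\<exists>x y z. bef \<sigma> x y \<and> bef \<sigma> y z \<and> y < x \<and> z < y)"
proof
  assume A: "avoids_321 \<sigma>"
  show "\<not> (\<exists>x y z. bef \<sigma> x y \<and> bef \<sigma> y z \<and> y < x \<and> z < y)"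
  proof
    assume "\<exists>x y z. bef \<sigma> x y \<and> bef \<sigma> y z \<and> y < x \<and> z < y"
    then obtain x y z where h: "bef \<sigma> x y" "bef \<sigma> y z" "y < x" "z < y" by blast
    obtain a b where ab: "a < b" "b < length \<sigma>" "\<sigma>!a = x" "\<sigma>!b = y" using h(1) unfolding bef_nth by blast
    obtain b' c where bc: "b' < c" "c < length \<sigma>" "\<sigma>!b' = y" "\<sigma>!c = z" using h(2) unfolding bef_nth by blast
    have "b = b'" using ab bc assms nth_eq_iff_index_eq by (metis order.strict_trans)
    then show False using A ab bc h unfolding avoids_321_def by blast
  qed
next
  assume N: "\<not> (\<exists>x y z. bef \<sigma> x y \<and> bef \<sigma> y z \<and> y < x \<and> z < y)"
  show "avoids_321 \<sigma>" unfolding avoids_321_def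
  proof
    assume "\<exists>a b c. a < b \<and> b < c \<and> c < length \<sigma> \<and> \<sigma> ! a > \<sigma> ! b \<and> \<sigma> ! b > \<sigma> ! c"
    then obtain a b c where h: "a < b" "b < c" "c < length \<sigma>" "\<sigma> ! a > \<sigma> ! b" "\<sigma> ! b > \<sigma> ! c" by blast
    have "bef \<sigma> (\<sigma>!a) (\<sigma>!b)" unfolding bef_nth by (intro exI[of _ a] exI[of _ b]) (use h in auto)
    moreover have "bef \<sigma> (\<sigma>!b) (\<sigma>!c)" unfolding bef_nth by (intro exI[of _ b] exI[of _ c]) (use h in auto)
    ultimately show False using N h by blast
  qed
qed

fun merge :: "bool list \<Rightarrow> 'a list \<Rightarrow> 'a list \<Rightarrow> 'a list" where
  "merge [] xs ys = []"
| "merge (b#bs) xs ys = (if b then hd ys # merge bs xs (tl ys) else hd xs # merge bs (tl xs) ys)"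

abbreviation cnt :: "bool list \<Rightarrow> nat" where "cnt r \<equiv> length (filter id r)"
abbreviation cntF :: "bool list \<Rightarrow> nat" where "cntF r \<equiv> length (filter Not r)"

lemma cnt_split: "length r = cnt r + cntF r"
  by (induction r) auto

lemma length_merge[simp]: "length (merge ms xs ys) = length ms"
  by (induction ms arbitrary: xs ys) auto

lemma merge_props:
  "cntF ms = length xs \<Longrightarrow> cnt ms = length ys \<Longrightarrow>
    (\<forall>x\<in>set xs. \<not> P x) \<Longrightarrow> (\<forall>y\<in>set ys. P y) \<Longrightarrow>
    filter P (merge ms xs ys) = ys \<and> filter (\<lambda>x. \<not> P x) (merge ms xs ys) = xs \<and>
    map P (merge ms xs ys) = ms \<and> set (merge ms xs ys) = set xs \<union> set ys"
proof (induction ms arbitrary: xs ys)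
  case Nil then show ?case by simp
next
  case (Cons b ms)
  show ?case
  proof (cases b)
    case True
    then obtain y ys' where ys: "ys = y # ys'" using Cons.prems by (cases ys) auto
    have "filter P (merge ms xs ys') = ys' \<and> filter (\<lambda>x. \<not> P x) (merge ms xs ys') = xs \<and>
      map P (merge ms xs ys') = ms \<and> set (merge ms xs ys') = set xs \<union> set ys'"
      using Cons.prems True ys by (intro Cons.IH) auto
    then show ?thesis using True ys Cons.prems by auto
  next
    case False
    then obtain x xs' where xs: "xs = x # xs'" using Cons.prems by (cases xs) auto
    have "filter P (merge ms xs' ys) = ys \<and> filter (\<lambda>x. \<not> P x) (merge ms xs' ys) = xs' \<and>
      map P (merge ms xs' ys) = ms \<and> set (merge ms xs' ys) = set xs' \<union> set ys"
      using Cons.prems False xs by (intro Cons.IH) auto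
    then show ?thesis using False xs Cons.prems by auto
  qed
qed

lemma merge_filter: "(\<And>x. x \<in> set zs \<Longrightarrow> Q x \<longleftrightarrow> \<not> P x) \<Longrightarrow>
   merge (map P zs) (filter Q zs) (filter P zs) = zs"
  by (induction zs) auto

lemma merge_append: "merge (r1 @ r2) xs ys = merge r1 xs ys @ merge r2 (drop (cntF r1) xs) (drop (cnt r1) ys)"
  by (induction r1 arbitrary: xs ys) (auto simp: drop_Suc drop_tl)

lemma merge_repF: "merge (replicate n False) xs ys = take n xs" if "n \<le> length xs"
  using that
proof (induction n arbitrary: xs)
  case (Suc n) then show ?case by (cases xs) auto
qed simp

lemma merge_repT: "merge (replicate n True) xs ys = take n ys" if "n \<le> length ys"
  using that
proof (induction n arbitrary: ys)
  case (Suc n) then show ?case by (cases ys) auto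
qed simp

lemma sorted_bool: "sorted (r::bool list) \<Longrightarrow> r = replicate (cntF r) False @ replicate (cnt r) True"
proof (induction r)
  case Nil then show ?case by simp
next
  case (Cons b r)
  show ?case
  proof (cases b)
    case True
    then have "\<forall>x\<in>set r. x" using Cons.prems by auto
    then have "r = replicate (length r) True" by (simp add: replicate_length_same)
    moreover have "filter Not r = []" "filter id r = r" using \<open>\<forall>x\<in>set r. x\<close> by (auto simp: filter_id_conv)
    have e: "cntF (b#r) = 0" "cnt (b#r) = Suc (length r)" using True \<open>filter Not r = []\<close> \<open>filter id r = r\<close> by simp_all
    have "b # r = replicate (Suc (length r)) True" using True \<open>r = replicate (length r) True\<close> by (metis replicate_Suc)
    then show ?thesis unfolding e by simp
  next
    case False
    then show ?thesis using Cons by simp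
  qed
qed

lemma merge_sorted:
  fixes xs ys :: "nat list"
  assumes "sorted ms" "sorted xs" "sorted ys" "\<forall>x\<in>set xs. \<forall>y\<in>set ys. x \<le> y"
    "cntF ms = length xs" "cnt ms = length ys"
  shows "sorted (merge ms xs ys)"
proof -
  have "merge ms xs ys = merge (replicate (cntF ms) False @ replicate (cnt ms) True) xs ys"
    using sorted_bool[OF assms(1)] by simp
  also have "\<dots> = xs @ ys" using assms(5,6) by (simp add: merge_append merge_repF merge_repT)
  finally show ?thesis using assms(2,3,4) by (simp add: sorted_append)
qed

definition Eset :: "nat \<Rightarrow> nat \<Rightarrow> nat \<Rightarrow> nat list set" where
  "Eset s t m = {\<sigma> \<in> lin_ext_combB s t. avoids_321 \<sigma> \<and> (s-1)*t+1 \<in> set (take m \<sigma>) \<and> sorted (drop m \<sigma>)}"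

definition Rset :: "nat \<Rightarrow> nat \<Rightarrow> nat \<Rightarrow> nat \<Rightarrow> bool list set" where
  "Rset s t m p = {r. length r = s*t - p - 1 \<and> cnt r = t - 1 \<and> sorted (drop (m - p - 1) r)}"

definition Bl :: "nat \<Rightarrow> nat \<Rightarrow> nat list" where
  "Bl s t = [(s-1)*t+2..<s*t+1]"

definition Psi :: "nat \<Rightarrow> nat \<Rightarrow> nat \<Rightarrow> nat list \<Rightarrow> bool list \<Rightarrow> nat list" where
  "Psi s t p \<tau> r = take p \<tau> @ ((s-1)*t+1) # merge r (drop p \<tau>) (Bl s t)"

lemma distinct_by_filter: "distinct (filter P l) \<Longrightarrow> distinct (filter (\<lambda>x. \<not> P x) l) \<Longrightarrow> distinct l"
  by (induction l) (auto split: if_splits)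

lemma set_by_filter: "set l = set (filter P l) \<union> set (filter (\<lambda>x. \<not> P x) l)"
  by auto

lemma st_eq: "1 \<le> s \<Longrightarrow> s * t = (s-1)*t + (t::nat)"
proof -
  assume "1 \<le> s"
  then obtain n where "s = Suc n" by (cases s) auto
  then show ?thesis by simp
qed

lemma psi_facts:
  assumes s: "2 \<le> s" and t: "2 \<le> t" and d: "distinct \<tau>" and st: "set \<tau> = {1..(s-1)*t}"
    and lr: "length r = s*t - p - 1" and cr: "cnt r = t - 1"
  defines "N \<equiv> (s-1)*t"
  shows "p \<le> N" "length \<tau> = N"
    "filter (\<lambda>x. x \<le> N) (Psi s t p \<tau> r) = \<tau>"
    "filter (\<lambda>x. N < x) (Psi s t p \<tau> r) = [N+1..<s*t+1]"
    "drop (Suc p) (Psi s t p \<tau> r) = merge r (drop p \<tau>) (Bl s t)"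
    "map (\<lambda>x. N < x) (drop (Suc p) (Psi s t p \<tau> r)) = r"
    "Psi s t p \<tau> r ! p = N + 1" "length (Psi s t p \<tau> r) = s * t"
    "distinct (Psi s t p \<tau> r)" "set (Psi s t p \<tau> r) = {1..s*t}"
    "take p (Psi s t p \<tau> r) = take p \<tau>"
    "filter (\<lambda>x. x \<le> N) (merge r (drop p \<tau>) (Bl s t)) = drop p \<tau>"
    "filter (\<lambda>x. N < x) (merge r (drop p \<tau>) (Bl s t)) = Bl s t"
    "set (merge r (drop p \<tau>) (Bl s t)) = set (drop p \<tau>) \<union> set (Bl s t)"
proof -
  have stN: "s * t = N + t" unfolding N_def using s st_eq by simp
  show lt: "length \<tau> = N" using distinct_card[OF d] st by (simp add: N_def)
  have "cnt r \<le> length r" by simp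
  then show pN: "p \<le> N" using lr cr stN t by linarith
  define D where "D = drop p \<tau>"
  have lD: "length D = N - p" using lt by (simp add: D_def)
  have lB: "length (Bl s t) = t - 1" using stN t by (simp add: Bl_def N_def; arith)
  have setB: "set (Bl s t) = {N+2..s*t}" by (auto simp: Bl_def N_def)
  have cF: "cntF r = length D" using cnt_split[of r] lr cr lD stN t by linarith
  have sD: "set D \<subseteq> {1..N}" using st by (auto simp: D_def N_def dest: in_set_dropD)
  have M: "filter (\<lambda>x. N < x) (merge r D (Bl s t)) = Bl s t \<and> filter (\<lambda>x. \<not> N < x) (merge r D (Bl s t)) = D \<and>
    map (\<lambda>x. N < x) (merge r D (Bl s t)) = r \<and> set (merge r D (Bl s t)) = set D \<union> set (Bl s t)"
    by (rule merge_props) (use cF cr lB sD setB in auto)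
  have fC: "filter (\<lambda>x. x \<le> N) (merge r D (Bl s t)) = D" using M by (simp add: not_less)
  show "filter (\<lambda>x. x \<le> N) (merge r (drop p \<tau>) (Bl s t)) = drop p \<tau>" using fC by (simp add: D_def)
  show "filter (\<lambda>x. N < x) (merge r (drop p \<tau>) (Bl s t)) = Bl s t" using M by (simp add: D_def)
  show "set (merge r (drop p \<tau>) (Bl s t)) = set (drop p \<tau>) \<union> set (Bl s t)" using M by (simp add: D_def)
  have sT: "\<forall>x\<in>set (take p \<tau>). x \<le> N" using st by (auto simp: N_def dest: in_set_takeD)
  have ltk: "length (take p \<tau>) = p" using pN lt by simp
  have psi: "Psi s t p \<tau> r = take p \<tau> @ (N+1) # merge r D (Bl s t)" by (simp add: Psi_def D_def N_def)
  show f1: "filter (\<lambda>x. x \<le> N) (Psi s t p \<tau> r) = \<tau>" unfolding psi using sT fC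
    by (simp add: D_def)
  have "filter (\<lambda>x. N < x) (Psi s t p \<tau> r) = (N+1) # Bl s t" unfolding psi using sT M
    by (simp add: not_less[symmetric])
  also have "\<dots> = [N+1..<s*t+1]" unfolding Bl_def N_def using stN t N_def
    by (simp add: upt_conv_Cons)
  finally show f2: "filter (\<lambda>x. N < x) (Psi s t p \<tau> r) = [N+1..<s*t+1]" .
  show dr: "drop (Suc p) (Psi s t p \<tau> r) = merge r (drop p \<tau>) (Bl s t)" unfolding psi using ltk
    by (simp add: D_def)
  show "map (\<lambda>x. N < x) (drop (Suc p) (Psi s t p \<tau> r)) = r" using dr M by (simp add: D_def)
  show "Psi s t p \<tau> r ! p = N + 1" unfolding psi using ltk by (simp add: nth_append)
  show "length (Psi s t p \<tau> r) = s * t" unfolding psi using ltk lr pN stN t by simp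
  show "take p (Psi s t p \<tau> r) = take p \<tau>" unfolding psi using ltk by simp
  have f1': "filter (\<lambda>x. \<not> N < x) (Psi s t p \<tau> r) = \<tau>" using f1 by (simp add: not_less)
  show "distinct (Psi s t p \<tau> r)"
    by (rule distinct_by_filter[where P="\<lambda>x. N < x"]) (use f1' f2 d in simp_all)
  have "set (Psi s t p \<tau> r) = set [N+1..<s*t+1] \<union> set \<tau>"
    using set_by_filter[of "Psi s t p \<tau> r" "\<lambda>x. N < x"] unfolding f1' f2 .
  also have "\<dots> = {1..s*t}" using st stN unfolding N_def[symmetric] by auto
  finally show "set (Psi s t p \<tau> r) = {1..s*t}" .
qed

lemma big_block: "1 \<le> (s::nat) \<Longrightarrow> 1 \<le> t \<Longrightarrow> (s-1)*t < x \<Longrightarrow> x \<le> s*t \<Longrightarrow> (x-1) div t = s-1"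
proof -
  assume a: "1 \<le> s" "1 \<le> t" "(s-1)*t < x" "x \<le> s*t"
  have "(s-1)*t \<le> x - 1" using a(3) by linarith
  then have "((s-1)*t) div t \<le> (x-1) div t" by (rule div_le_mono)
  then have l: "s - 1 \<le> (x-1) div t" using a by simp
  have "x - 1 < s * t" using a(3) a(4) by linarith
  then have "(x-1) div t < s" by (rule less_mult_imp_div_less)
  then show ?thesis using l by linarith
qed

lemma small_block: "1 \<le> (x::nat) \<Longrightarrow> x \<le> (s-1)*t \<Longrightarrow> (x-1) div t < s-1"
proof -
  assume a: "1 \<le> x" "x \<le> (s-1)*t"
  then have "x - 1 < (s-1) * t" by linarith
  then show ?thesis by (rule less_mult_imp_div_less)
qed

lemma start_le: assumes "1 \<le> (x::nat)" "x \<le> (s-1)*t" "(x-1) mod t = 0" "2 \<le> s"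
  shows "x \<le> (s-2)*t + 1"
proof -
  have q: "(x-1) div t \<le> s - 2" using small_block[OF assms(1,2)] by linarith
  have "x - 1 = (x-1) div t * t + (x-1) mod t" by (rule div_mult_mod_eq[symmetric])
  then have "x - 1 = (x-1) div t * t" using assms(3) by linarith
  also have "\<dots> \<le> (s-2)*t" using q by (rule mult_le_mono1)
  finally show ?thesis by linarith
qed

lemma Rl_down: "Rl s t x y \<Longrightarrow> y \<le> (s-1)*t \<Longrightarrow> Rl (s-1) t x y"
  by (simp add: Rl_def)

lemma Rl_up: "Rl (s-1) t x y \<Longrightarrow> Rl s t x y"
proof -
  assume a: "Rl (s-1) t x y"
  then have "y \<le> (s-1)*t" by (simp add: Rl_def)
  moreover have "(s-1)*t \<le> s*t" by simp
  ultimately have "y \<le> s*t" by (rule le_trans)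
  then show ?thesis using a by (simp add: Rl_def)
qed

lemma fwd:
  assumes s: "2 \<le> s" and t: "2 \<le> t" and pm: "p < m"
    and tau: "\<tau> \<in> Eset (s-1) t p" and r: "r \<in> Rset s t m p"
  shows "Psi s t p \<tau> r \<in> Eset s t m"
proof -
  define N where "N = (s-1)*t"
  define \<sigma> where "\<sigma> = Psi s t p \<tau> r"
  define D where "D = drop p \<tau>"
  define C where "C = merge r D (Bl s t)"
  have E: "\<tau> \<in> lin_ext_combB (s-1) t \<and> avoids_321 \<tau> \<and> (s-1-1)*t+1 \<in> set (take p \<tau>) \<and> sorted (drop p \<tau>)"
    using tau unfolding Eset_def by blast
  have s2: "s - 1 - 1 = s - 2" by simp
  have tl: "\<tau> \<in> lin_ext_combB (s-1) t" and tav: "avoids_321 \<tau>"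
    and rr: "(s-2)*t+1 \<in> set (take p \<tau>)" and tso: "sorted (drop p \<tau>)"
    using E unfolding s2 by blast+
  have t1: "1 \<le> t" using t by simp
  have tL: "distinct \<tau>" "set \<tau> = {1..(s-1)*t}"
    "\<forall>x y. Rl (s-1) t x y \<longrightarrow> x \<in> set \<tau> \<longrightarrow> y \<in> set \<tau> \<longrightarrow> bef \<tau> x y"
    using tl lin_ext_iff[OF t1] by auto
  have rl: "length r = s*t - p - 1" "cnt r = t - 1" "sorted (drop (m - p - 1) r)"
    using r by (auto simp: Rset_def)
  note PF = psi_facts[OF s t tL(1) tL(2) rl(1) rl(2), folded N_def \<sigma>_def D_def C_def]
  have stN: "s * t = N + t" unfolding N_def using s st_eq by simp
  have dist: "distinct \<sigma>" and setS: "set \<sigma> = {1..s*t}" using PF by auto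
  have sig: "\<sigma> = take p \<tau> @ (N+1) # C" by (simp add: \<sigma>_def Psi_def N_def C_def D_def)
  have bef_small: "bef \<sigma> x y" if "bef \<tau> x y" for x y
  proof -
    have "x \<in> set \<tau>" "y \<in> set \<tau>" using bef_set[OF that] by auto
    then have "x \<le> N" "y \<le> N" using tL(2) by (auto simp: N_def)
    then show ?thesis using that PF(3) bef_filter[of "\<lambda>x. x \<le> N" \<sigma> x y] by simp
  qed
  have sortB: "sorted_wrt (<) [N+1..<s*t+1]" by (rule sorted_wrt_upt)
  have bef_big: "bef \<sigma> x y" if "N < x" "x < y" "y \<le> s*t" for x y
  proof -
    have "bef [N+1..<s*t+1] x y" by (rule sorted_bef[OF sortB]) (use that in auto)
    then show ?thesis using PF(4) bef_filter[of "\<lambda>x. N < x" \<sigma> x y] by simp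
  qed
  have takeS: "set (take p \<tau>) \<subseteq> {1..N}" using tL(2) by (auto simp: N_def dest: in_set_takeD)
  have setC: "set C = set D \<union> set (Bl s t)" using PF by (simp add: C_def D_def)
  have setD: "set D \<subseteq> {1..N}" using tL(2) by (auto simp: N_def D_def dest: in_set_dropD)
  have setBl: "set (Bl s t) = {N+2..s*t}" by (auto simp: Bl_def N_def)
  have lin: "\<forall>x y. Rl s t x y \<longrightarrow> x \<in> set \<sigma> \<longrightarrow> y \<in> set \<sigma> \<longrightarrow> bef \<sigma> x y"
  proof (intro allI impI)
    fix x y assume R: "Rl s t x y" and x: "x \<in> set \<sigma>" and y: "y \<in> set \<sigma>"
    have xy: "1 \<le> x" "x < y" "y \<le> s*t" using R by (auto simp: Rl_def)
    consider "y \<le> N" | "N < x" | "x \<le> N" "N < y" by linarith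
    then show "bef \<sigma> x y"
    proof cases
      case 1
      have "Rl (s-1) t x y" using Rl_down[OF R] 1 by (simp add: N_def)
      moreover have "x \<in> set \<tau>" "y \<in> set \<tau>" using tL(2) xy 1 by (auto simp: N_def)
      ultimately show ?thesis using tL(3) bef_small by blast
    next
      case 2 then show ?thesis using bef_big xy by blast
    next
      case 3
      have nb: "(x-1) div t \<noteq> (y-1) div t"
        using small_block[of x s t] big_block[of s t y] xy 3 s t by (simp add: N_def)
      then have md: "(x-1) mod t = 0" using R by (simp add: Rl_def)
      define q where "q = (s-2)*t+1"
      have xq: "x \<le> q" unfolding q_def using start_le[of x s t] xy 3 md s by (simp add: N_def)
      have "(s-1)*t = (s-1-1)*t + t" using st_eq[of "s-1" t] s by simp
      moreover have "s - 1 - 1 = s - 2" by simp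
      ultimately have "N = (s-2)*t + t" unfolding N_def by metis
      then have qN: "q \<le> N" unfolding q_def using t by linarith
      have q_in: "q \<in> set (take p \<sigma>)" using rr PF(11) by (simp add: q_def)
      have "y \<notin> set (take p \<sigma>)" using PF(11) takeS 3 by auto
      then have "y \<in> set (drop p \<sigma>)" using y by (metis append_take_drop_id Un_iff set_append)
      then have bqy: "bef \<sigma> q y" using q_in bef_append[of "take p \<sigma>" "drop p \<sigma>" q y] by simp
      show ?thesis
      proof (cases "x = q")
        case True then show ?thesis using bqy by simp
      next
        case False
        then have "Rl (s-1) t x q" using xq qN xy md by (simp add: Rl_def N_def)
        moreover have "x \<in> set \<tau>" "q \<in> set \<tau>" using tL(2) xy xq qN 3 unfolding q_def by (auto simp: N_def)
        ultimately have "bef \<sigma> x q" using tL(3) bef_small by blast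
        then show ?thesis using bef_trans[OF dist _ bqy] by blast
      qed
    qed
  qed
  have av: "\<not> (\<exists>x y z. bef \<sigma> x y \<and> bef \<sigma> y z \<and> y < x \<and> z < y)"
  proof
    assume "\<exists>x y z. bef \<sigma> x y \<and> bef \<sigma> y z \<and> y < x \<and> z < y"
    then obtain x y z where h: "bef \<sigma> x y" "bef \<sigma> y z" "y < x" "z < y" by blast
    have inS: "x \<in> set \<sigma>" "y \<in> set \<sigma>" "z \<in> set \<sigma>" using h bef_set by metis+
    consider "x \<le> N" | "N < y" | "y \<le> N" "N < x" by linarith
    then show False
    proof cases
      case 1
      then have "bef \<tau> x y" "bef \<tau> y z" using h PF(3) bef_filter[of "\<lambda>x. x \<le> N" \<sigma>] by auto
      then show False using tav avoids_iff[OF tL(1)] h by blast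
    next
      case 2
      then have "bef [N+1..<s*t+1] x y" using h PF(4) bef_filter[of "\<lambda>x. N < x" \<sigma>] by auto
      then show False using bef_sorted_less[OF sortB] h by fastforce
    next
      case 3
      have xA: "x \<notin> set (take p \<tau>)" using takeS 3 by auto
      have "bef (take p \<tau>) x y \<or> (x \<in> set (take p \<tau>) \<and> y \<in> set ((N+1) # C)) \<or> bef ((N+1) # C) x y"
        using h(1) bef_append[of "take p \<tau>" "(N+1) # C"] sig by simp
      then have "bef ((N+1) # C) x y" using xA bef_set by metis
      then have yC: "y \<in> set C" using 3 by (auto dest: bef_set)
      have yA: "y \<notin> set (take p \<tau>)" using dist yC sig by auto
      have "bef (take p \<tau>) y z \<or> (y \<in> set (take p \<tau>) \<and> z \<in> set ((N+1) # C)) \<or> bef ((N+1) # C) y z"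
        using h(2) bef_append[of "take p \<tau>" "(N+1) # C"] sig by simp
      then have "bef ((N+1) # C) y z" using yA bef_set by metis
      then have "bef C y z" using 3 by auto
      then have "bef (filter (\<lambda>x. x \<le> N) C) y z" using 3 h bef_filter[of "\<lambda>x. x \<le> N" C] by auto
      then have "bef D y z" using PF(12) by (simp add: C_def D_def)
      then have "y \<le> z" using bef_sorted_le tso by (simp add: D_def)
      then show False using h by simp
    qed
  qed
  have lS: "length \<sigma> = s*t" using PF by simp
  have pl: "p < length \<sigma>" using PF(1) lS stN t by linarith
  have "N + 1 \<in> set (take m \<sigma>)"
  proof -
    have "take m \<sigma> ! p = N + 1" using PF(7) pm pl by simp
    moreover have "p < length (take m \<sigma>)" using pm pl by simp
    ultimately show ?thesis by (metis nth_mem)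
  qed
  moreover have "sorted (drop m \<sigma>)"
  proof -
    define k where "k = m - p - 1"
    have e: "m - Suc p + Suc p = m" using pm by simp
    have "drop m \<sigma> = drop (m - Suc p) (drop (Suc p) \<sigma>)" by (simp only: drop_drop e)
    then have dm: "drop m \<sigma> = drop k C" using PF(5) unfolding k_def C_def D_def by simp
    show ?thesis
    proof (cases "k < length r")
      case False
      then have "drop k C = []" by (simp add: C_def)
      then show ?thesis using dm by simp
    next
      case True
      define r1 where "r1 = take k r"
      define r2 where "r2 = drop k r"
      have rs: "r = r1 @ r2" by (simp add: r1_def r2_def)
      have lr1: "length (merge r1 D (Bl s t)) = k" using True by (simp add: r1_def)
      have "C = merge r1 D (Bl s t) @ merge r2 (drop (cntF r1) D) (drop (cnt r1) (Bl s t))"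
        unfolding C_def rs by (rule merge_append)
      then have dk: "drop k C = merge r2 (drop (cntF r1) D) (drop (cnt r1) (Bl s t))" using lr1 by simp
      have c1: "cntF r = cntF r1 + cntF r2" "cnt r = cnt r1 + cnt r2" unfolding rs by simp_all
      have lD: "length D = N - p" using PF(2) by (simp add: D_def)
      have lB: "length (Bl s t) = t - 1" using stN t by (simp add: Bl_def N_def; arith)
      have cF: "cntF r = length D" using cnt_split[of r] rl lD stN t PF(1) by linarith
      show ?thesis unfolding dm dk
      proof (rule merge_sorted)
        show "sorted r2" using rl(3) by (simp add: r2_def k_def)
        show "sorted (drop (cntF r1) D)" using tso unfolding D_def by (rule sorted_wrt_drop)
        have "sorted (Bl s t)" unfolding Bl_def by (rule sorted_upt)
        then show "sorted (drop (cnt r1) (Bl s t))" by (rule sorted_wrt_drop)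
        show "\<forall>x\<in>set (drop (cntF r1) D). \<forall>y\<in>set (drop (cnt r1) (Bl s t)). x \<le> y"
          using setD setBl by (fastforce dest: in_set_dropD)
        show "cntF r2 = length (drop (cntF r1) D)" using c1 cF by simp
        show "cnt r2 = length (drop (cnt r1) (Bl s t))" using c1 rl(2) lB by simp
      qed
    qed
  qed
  moreover have "\<sigma> \<in> lin_ext_combB s t" using lin_ext_iff[OF t1] dist setS lin by blast
  moreover have "avoids_321 \<sigma>" using avoids_iff[OF dist] av by blast
  ultimately show ?thesis unfolding Eset_def \<sigma>_def N_def by blast
qed

lemma sorted_map_less: "sorted (l::nat list) \<Longrightarrow> sorted (map (\<lambda>x. N < x) l)"
  by (induction l) (auto simp: le_bool_def)

lemma bwd:
  assumes s: "2 \<le> s" and t: "2 \<le> t" and sig: "\<sigma> \<in> Eset s t m"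
  shows "\<exists>p<m. \<exists>\<tau> r. \<tau> \<in> Eset (s-1) t p \<and> r \<in> Rset s t m p \<and> \<sigma> = Psi s t p \<tau> r"
proof -
  define N where "N = (s-1)*t"
  have stN: "s * t = N + t" unfolding N_def using s st_eq by simp
  have t1: "1 \<le> t" using t by simp
  have E: "\<sigma> \<in> lin_ext_combB s t" "avoids_321 \<sigma>" "N+1 \<in> set (take m \<sigma>)" "sorted (drop m \<sigma>)"
    using sig unfolding Eset_def N_def by blast+
  have dist: "distinct \<sigma>" and setS: "set \<sigma> = {1..s*t}"
    and linS: "\<forall>x y. Rl s t x y \<longrightarrow> x \<in> set \<sigma> \<longrightarrow> y \<in> set \<sigma> \<longrightarrow> bef \<sigma> x y"
    using E(1) lin_ext_iff[OF t1] by blast+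
  have av: "\<not> (\<exists>x y z. bef \<sigma> x y \<and> bef \<sigma> y z \<and> y < x \<and> z < y)" using E(2) avoids_iff[OF dist] by blast
  have lS: "length \<sigma> = s*t" using distinct_card[OF dist] setS by simp
  obtain p where pt: "p < length (take m \<sigma>)" "take m \<sigma> ! p = N+1"
    using E(3) by (metis in_set_conv_nth)
  have pm: "p < m" and pl: "p < length \<sigma>" and sp: "\<sigma> ! p = N+1" using pt by auto
  define A where "A = take p \<sigma>"
  define D' where "D' = drop (Suc p) \<sigma>"
  have sg: "\<sigma> = A @ (N+1) # D'" unfolding A_def D'_def using id_take_nth_drop[OF pl] sp by simp
  have lA: "length A = p" using pl by (simp add: A_def)
  have dist': "distinct A" "distinct D'" "N+1 \<notin> set A" "N+1 \<notin> set D'" "set A \<inter> set D' = {}"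
  proof -
    have "distinct (A @ (N+1) # D')" using dist sg by metis
    then show "distinct A" "distinct D'" "N+1 \<notin> set A" "N+1 \<notin> set D'" "set A \<inter> set D' = {}"
      by auto
  qed
  have N1: "Rl s t (N+1) x" if "N+1 < x" "x \<le> s*t" for x
    using that by (simp add: Rl_def N_def)
  have Asmall: "\<forall>x\<in>set A. x \<le> N"
  proof
    fix x assume xA: "x \<in> set A"
    show "x \<le> N"
    proof (rule ccontr)
      assume "\<not> x \<le> N"
      moreover have "x \<noteq> N+1" using xA dist' by auto
      moreover have "x \<in> set \<sigma>" using xA sg by simp
      ultimately have "N+1 < x" "x \<le> s*t" using setS by auto
      then have R: "Rl s t (N+1) x" by (rule N1)
      have "N+1 \<in> set \<sigma>" using sg by simp
      then have b: "bef \<sigma> (N+1) x" using linS R \<open>x \<in> set \<sigma>\<close> by blast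
      have "bef A (N+1) x \<or> (N+1 \<in> set A \<and> x \<in> set ((N+1) # D')) \<or> bef ((N+1) # D') (N+1) x"
        using b sg bef_append[of A "(N+1) # D'"] by simp
      then have "bef ((N+1) # D') (N+1) x" using dist' bef_set by metis
      then have "x \<in> set D'" using \<open>x \<noteq> N+1\<close> by (auto dest: bef_set)
      then show False using xA dist' by auto
    qed
  qed
  define \<tau> where "\<tau> = filter (\<lambda>x. x \<le> N) \<sigma>"
  have tau_eq: "\<tau> = A @ filter (\<lambda>x. x \<le> N) D'" unfolding \<tau>_def using sg Asmall
    by (simp add: filter_id_conv)
  have tk: "take p \<tau> = A" and td: "drop p \<tau> = filter (\<lambda>x. x \<le> N) D'" using tau_eq lA by simp_all
  have bsort: "sorted_wrt (<) (filter (\<lambda>x. N < x) \<sigma>)"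
  proof (rule bef_imp_sorted)
    fix x y assume b: "bef (filter (\<lambda>x. N < x) \<sigma>) x y"
    then have bxy: "bef \<sigma> x y" "N < x" "N < y" using bef_filter by metis+
    have xy: "x \<in> set \<sigma>" "y \<in> set \<sigma>" using bef_set[OF bxy(1)] by auto
    show "x < y"
    proof (rule ccontr)
      assume "\<not> x < y"
      moreover have "x \<noteq> y" using bxy(1) bef_irrefl[OF dist] by metis
      ultimately have "y < x" by simp
      moreover have "x \<le> s*t" "y \<le> s*t" "1 \<le> y" using xy setS by auto
      ultimately have "Rl s t y x" using big_block[of s t x] big_block[of s t y] bxy s t
        by (simp add: Rl_def N_def)
      then have "bef \<sigma> y x" using linS xy by blast
      then show False using bef_asym[OF dist bxy(1)] by blast
    qed
  qed
  have "\<forall>x\<in>set A. \<not> N < x" using Asmall by (simp add: not_less)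
  then have fb: "filter (\<lambda>x. N < x) \<sigma> = (N+1) # filter (\<lambda>x. N < x) D'" using sg
    by (simp add: filter_empty_conv)
  have setfb: "set (filter (\<lambda>x. N < x) \<sigma>) = {N+1..s*t}" using setS by auto
  have setD'b: "set (filter (\<lambda>x. N < x) D') = {N+2..s*t}"
  proof -
    have "insert (N+1) (set (filter (\<lambda>x. N < x) D')) = {N+1..s*t}" using setfb fb by simp
    moreover have "N+1 \<notin> set (filter (\<lambda>x. N < x) D')" using dist' by simp
    ultimately have "set (filter (\<lambda>x. N < x) D') = {N+1..s*t} - {N+1}" by blast
    moreover have "{N+1..s*t} - {N+1} = {N+2..s*t}" by auto
    ultimately show ?thesis by simp
  qed
  have Bl_eq: "filter (\<lambda>x. N < x) D' = Bl s t"
  proof (rule sorted_distinct_set_unique)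
    have "sorted_wrt (<) (filter (\<lambda>x. N < x) D')" using bsort fb by simp
    then show "sorted (filter (\<lambda>x. N < x) D')" "distinct (filter (\<lambda>x. N < x) D')"
      using strict_sorted_iff by blast+
    show "sorted (Bl s t)" unfolding Bl_def by (rule sorted_upt)
    show "distinct (Bl s t)" by (simp add: Bl_def)
    have setBl: "set (Bl s t) = {N+2..s*t}" by (auto simp: Bl_def N_def)
    show "set (filter (\<lambda>x. N < x) D') = set (Bl s t)" unfolding setBl setD'b ..
  qed
  define r where "r = map (\<lambda>x. N < x) D'"
  have D'_eq: "D' = merge r (filter (\<lambda>x. x \<le> N) D') (filter (\<lambda>x. N < x) D')"
    unfolding r_def by (rule merge_filter[symmetric]) auto
  have psi: "\<sigma> = Psi s t p \<tau> r" unfolding Psi_def tk td using sg D'_eq Bl_eq by (simp add: N_def)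
  have setT: "set \<tau> = {1..(s-1)*t}" unfolding \<tau>_def using setS stN by (auto simp: N_def)
  have distT: "distinct \<tau>" unfolding \<tau>_def using dist by simp
  have linT: "\<forall>x y. Rl (s-1) t x y \<longrightarrow> x \<in> set \<tau> \<longrightarrow> y \<in> set \<tau> \<longrightarrow> bef \<tau> x y"
  proof (intro allI impI)
    fix x y assume R: "Rl (s-1) t x y" and x: "x \<in> set \<tau>" and y: "y \<in> set \<tau>"
    have "bef \<sigma> x y" using linS Rl_up[OF R] x y unfolding \<tau>_def by auto
    then show "bef \<tau> x y" using x y unfolding \<tau>_def bef_filter by auto
  qed
  have avT: "avoids_321 \<tau>"
  proof -
    have "\<not> (\<exists>x y z. bef \<tau> x y \<and> bef \<tau> y z \<and> y < x \<and> z < y)"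
      using av unfolding \<tau>_def bef_filter by blast
    then show ?thesis using avoids_iff[OF distT] by blast
  qed
  define q where "q = (s-2)*t+1"
  have "(s-1)*t = (s-1-1)*t + t" using st_eq[of "s-1" t] s by simp
  moreover have "s - 1 - 1 = s - 2" by simp
  ultimately have Nq: "N = (s-2)*t + t" unfolding N_def by metis
  have qA: "q \<in> set A"
  proof -
    have "q \<le> N" "1 \<le> q" using Nq t unfolding q_def by linarith+
    then have R: "Rl s t q (N+1)" using stN t by (simp add: Rl_def q_def)
    have "q \<in> set \<sigma>" using \<open>q \<le> N\<close> \<open>1 \<le> q\<close> setS stN by auto
    moreover have "N+1 \<in> set \<sigma>" using sg by simp
    ultimately have b: "bef \<sigma> q (N+1)" using linS R by blast
    have "bef A q (N+1) \<or> (q \<in> set A \<and> N+1 \<in> set ((N+1) # D')) \<or> bef ((N+1) # D') q (N+1)"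
      using b sg bef_append[of A "(N+1) # D'"] by simp
    moreover have "\<not> bef A q (N+1)" using dist' bef_set by metis
    moreover have "\<not> bef ((N+1) # D') q (N+1)" using dist' \<open>q \<le> N\<close> by (auto dest: bef_set)
    ultimately show ?thesis by blast
  qed
  have sortT: "sorted (drop p \<tau>)"
  proof -
    have "sorted_wrt (<) (filter (\<lambda>x. x \<le> N) D')"
    proof (rule bef_imp_sorted)
      fix y z assume b: "bef (filter (\<lambda>x. x \<le> N) D') y z"
      then have byz: "bef D' y z" "y \<le> N" "z \<le> N" using bef_filter by metis+
      show "y < z"
      proof (rule ccontr)
        assume "\<not> y < z"
        moreover have "y \<noteq> z" using byz(1) bef_irrefl[OF dist'(2)] by metis
        ultimately have zy: "z < y" by simp
        have "y \<in> set D'" using bef_set[OF byz(1)] by simp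
        then have "bef ((N+1) # D') (N+1) y" by simp
        then have b1: "bef \<sigma> (N+1) y" using sg bef_append[of A "(N+1) # D'"] by simp
        have "bef ((N+1) # D') y z" using byz(1) by simp
        then have b2: "bef \<sigma> y z" using sg bef_append[of A "(N+1) # D'"] by simp
        have "y < N+1" using byz(2) by simp
        then show False using av b1 b2 zy by blast
      qed
    qed
    then show ?thesis using td strict_sorted_imp_sorted by simp
  qed
  have tauE: "\<tau> \<in> Eset (s-1) t p"
  proof -
    have "\<tau> \<in> lin_ext_combB (s-1) t" using lin_ext_iff[OF t1] distT setT linT by blast
    moreover have "(s-1-1)*t+1 \<in> set (take p \<tau>)" using qA tk \<open>s - 1 - 1 = s - 2\<close> by (simp add: q_def)
    ultimately show ?thesis using avT sortT unfolding Eset_def by blast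
  qed
  have lr: "length r = s*t - p - 1" using lS by (simp add: r_def D'_def)
  have cr: "cnt r = t - 1"
  proof -
    have "cnt r = length (filter (\<lambda>x. N < x) D')" by (simp add: r_def filter_map comp_def)
    also have "\<dots> = t - 1" using Bl_eq stN t by (simp add: Bl_def N_def; arith)
    finally show ?thesis .
  qed
  have sr: "sorted (drop (m - p - 1) r)"
  proof -
    have e: "m - Suc p + Suc p = m" using pm by simp
    have "drop m \<sigma> = drop (m - Suc p) (drop (Suc p) \<sigma>)" by (simp only: drop_drop e)
    then have "sorted (drop (m - Suc p) D')" using E(4) by (simp add: D'_def)
    then have "sorted (map (\<lambda>x. N < x) (drop (m - Suc p) D'))" by (rule sorted_map_less)
    then show ?thesis by (simp add: r_def drop_map)
  qed
  have "r \<in> Rset s t m p" using lr cr sr by (simp add: Rset_def)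
  then show ?thesis using pm tauE psi by blast
qed

lemma psi_inj:
  assumes s: "2 \<le> s" and t: "2 \<le> t"
    and d: "distinct \<tau>" "set \<tau> = {1..(s-1)*t}" "length r = s*t - p - 1" "cnt r = t - 1"
    and d': "distinct \<tau>'" "set \<tau>' = {1..(s-1)*t}" "length r' = s*t - p' - 1" "cnt r' = t - 1"
    and eq: "Psi s t p \<tau> r = Psi s t p' \<tau>' r'"
  shows "p = p' \<and> \<tau> = \<tau>' \<and> r = r'"
proof -
  note F = psi_facts[OF s t d]
  note F' = psi_facts[OF s t d']
  have stN: "s * t = (s-1)*t + t" using s st_eq by simp
  have pl: "p < s*t" "p' < s*t" using F(1) F'(1) stN t by linarith+
  have "Psi s t p \<tau> r ! p = Psi s t p \<tau> r ! p'" using F(7) F'(7) eq by simp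
  then have pp: "p = p'" using nth_eq_iff_index_eq[OF F(9)] pl F(8) by simp
  have "\<tau> = \<tau>'" using F(3) F'(3) eq by simp
  moreover have "r = r'" using F(6) F'(6) eq pp by simp
  ultimately show ?thesis using pp by simp
qed

lemma Eset_valid:
  assumes "2 \<le> t" "\<tau> \<in> Eset s t p"
  shows "distinct \<tau>" "set \<tau> = {1..s*t}" "length \<tau> = s*t"
proof -
  have t1: "1 \<le> t" using assms by simp
  have "\<tau> \<in> lin_ext_combB s t" using assms by (simp add: Eset_def)
  then show d: "distinct \<tau>" and st: "set \<tau> = {1..s*t}" using lin_ext_iff[OF t1] by blast+
  show "length \<tau> = s*t" using distinct_card[OF d] st by simp
qed

lemma finE: assumes "2 \<le> t" shows "finite (Eset s t m)"
proof (rule finite_subset)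
  show "Eset s t m \<subseteq> {xs. set xs \<subseteq> {1..s*t} \<and> length xs \<le> s*t}"
    using Eset_valid[OF assms] by auto
  show "finite {xs. set xs \<subseteq> {1..s*t} \<and> length xs \<le> s*t}" by (rule finite_lists_length_le) simp
qed

lemma finR: "finite (Rset s t m p)"
proof (rule finite_subset)
  show "Rset s t m p \<subseteq> {xs. set xs \<subseteq> (UNIV::bool set) \<and> length xs \<le> s*t}"
    by (auto simp: Rset_def)
  show "finite {xs. set xs \<subseteq> (UNIV::bool set) \<and> length xs \<le> s*t}" by (rule finite_lists_length_le) simp
qed

lemma card_rec:
  assumes s: "2 \<le> s" and t: "2 \<le> t"
  shows "card (Eset s t m) = (\<Sum>p<m. card (Eset (s-1) t p) * card (Rset s t m p))"
proof -
  define G where "G p = (\<lambda>(\<tau>,r). Psi s t p \<tau> r) ` (Eset (s-1) t p \<times> Rset s t m p)" for p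
  have valid: "distinct \<tau> \<and> set \<tau> = {1..(s-1)*t} \<and> length r = s*t - p - 1 \<and> cnt r = t - 1"
    if "\<tau> \<in> Eset (s-1) t p" "r \<in> Rset s t m p" for \<tau> r p
    using Eset_valid[OF t that(1)] that(2) by (simp add: Rset_def)
  have eq: "Eset s t m = (\<Union>p\<in>{..<m}. G p)"
  proof
    show "Eset s t m \<subseteq> (\<Union>p\<in>{..<m}. G p)"
    proof
      fix \<sigma> assume "\<sigma> \<in> Eset s t m"
      then obtain p \<tau> r where "p < m" "\<tau> \<in> Eset (s-1) t p" "r \<in> Rset s t m p" "\<sigma> = Psi s t p \<tau> r"
        using bwd[OF s t] by blast
      then show "\<sigma> \<in> (\<Union>p\<in>{..<m}. G p)" unfolding G_def by force
    qed
    show "(\<Union>p\<in>{..<m}. G p) \<subseteq> Eset s t m"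
      unfolding G_def using fwd[OF s t] by auto
  qed
  have inj: "inj_on (\<lambda>(\<tau>,r). Psi s t p \<tau> r) (Eset (s-1) t p \<times> Rset s t m p)" for p
  proof (rule inj_onI)
    fix a b assume a: "a \<in> Eset (s-1) t p \<times> Rset s t m p" and b: "b \<in> Eset (s-1) t p \<times> Rset s t m p"
      and e: "(\<lambda>(\<tau>,r). Psi s t p \<tau> r) a = (\<lambda>(\<tau>,r). Psi s t p \<tau> r) b"
    obtain \<tau> r \<tau>' r' where ab: "a = (\<tau>, r)" "b = (\<tau>', r')" by (cases a, cases b)
    have v: "distinct \<tau>" "set \<tau> = {1..(s-1)*t}" "length r = s*t - p - 1" "cnt r = t - 1"
      using valid[of \<tau> p r] a ab by auto
    have v': "distinct \<tau>'" "set \<tau>' = {1..(s-1)*t}" "length r' = s*t - p - 1" "cnt r' = t - 1"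
      using valid[of \<tau>' p r'] b ab by auto
    have "Psi s t p \<tau> r = Psi s t p \<tau>' r'" using e ab by simp
    then have "p = p \<and> \<tau> = \<tau>' \<and> r = r'" by (rule psi_inj[OF s t v v'])
    then show "a = b" using ab by simp
  qed
  have cardG: "card (G p) = card (Eset (s-1) t p) * card (Rset s t m p)" for p
    unfolding G_def using card_image[OF inj] card_cartesian_product by metis
  have finG: "finite (G p)" for p unfolding G_def using finE[OF t] finR by blast
  have disj: "G p \<inter> G p' = {}" if "p \<noteq> p'" for p p'
  proof (rule ccontr)
    assume "G p \<inter> G p' \<noteq> {}"
    then obtain \<tau> r \<tau>' r' where h: "\<tau> \<in> Eset (s-1) t p" "r \<in> Rset s t m p"
      "\<tau>' \<in> Eset (s-1) t p'" "r' \<in> Rset s t m p'" "Psi s t p \<tau> r = Psi s t p' \<tau>' r'"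
      unfolding G_def by auto
    have v: "distinct \<tau>" "set \<tau> = {1..(s-1)*t}" "length r = s*t - p - 1" "cnt r = t - 1"
      using valid[of \<tau> p r] h by auto
    have v': "distinct \<tau>'" "set \<tau>' = {1..(s-1)*t}" "length r' = s*t - p' - 1" "cnt r' = t - 1"
      using valid[of \<tau>' p' r'] h by auto
    have "p = p' \<and> \<tau> = \<tau>' \<and> r = r'" by (rule psi_inj[OF s t v v' h(5)])
    then have "p = p'" by simp
    then show False using that by simp
  qed
  have "card (Eset s t m) = (\<Sum>p<m. card (G p))"
    unfolding eq by (rule card_UN_disjoint) (use finG disj in auto)
  then show ?thesis using cardG by simp
qed

lemma fin_bl: "finite {xs::bool list. length xs \<le> a}"
  using finite_lists_length_le[of "UNIV::bool set" a] by simp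

lemma bl_split: "{r::bool list. length r = Suc a \<and> cnt r = j} =
   (if j = 0 then {} else Cons True ` {r. length r = a \<and> cnt r = j - 1}) \<union> Cons False ` {r. length r = a \<and> cnt r = j}"
proof (intro set_eqI iffI)
  fix r :: "bool list" assume "r \<in> {r. length r = Suc a \<and> cnt r = j}"
  then obtain b r' where r: "r = b # r'" "length r' = a" "cnt r = j" by (auto simp: length_Suc_conv)
  then show "r \<in> (if j = 0 then {} else Cons True ` {r. length r = a \<and> cnt r = j - 1}) \<union> Cons False ` {r. length r = a \<and> cnt r = j}"
    by (cases b) auto
next
  fix r :: "bool list"
  assume "r \<in> (if j = 0 then {} else Cons True ` {r. length r = a \<and> cnt r = j - 1}) \<union> Cons False ` {r. length r = a \<and> cnt r = j}"
  then show "r \<in> {r. length r = Suc a \<and> cnt r = j}" by (auto split: if_splits)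
qed

lemma card_bl: "card {r::bool list. length r = a \<and> cnt r = j} = a choose j"
proof (induction a arbitrary: j)
  case 0
  have e: "{r::bool list. length r = 0 \<and> cnt r = j} = (if j = 0 then {[]} else {})" by auto
  show ?case unfolding e by simp
next
  case (Suc a)
  have fin: "finite {r::bool list. length r = a \<and> cnt r = i}" for i
    by (rule finite_subset[OF _ fin_bl[of a]]) auto
  show ?case
  proof (cases j)
    case 0
    then have "card {r::bool list. length r = Suc a \<and> cnt r = j} = card (Cons False ` {r. length r = a \<and> cnt r = 0})"
      using bl_split[of a j] by simp
    also have "\<dots> = card {r::bool list. length r = a \<and> cnt r = 0}" by (rule card_image) simp
    also have "\<dots> = 1" using Suc.IH[of 0] by (simp add: id_def)
    finally show ?thesis using 0 by (simp add: id_def)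
  next
    case (Suc j')
    then have "card {r::bool list. length r = Suc a \<and> cnt r = j} =
       card (Cons True ` {r. length r = a \<and> cnt r = j'} \<union> Cons False ` {r. length r = a \<and> cnt r = j})"
      using bl_split[of a j] by simp
    also have "\<dots> = card (Cons True ` {r. length r = a \<and> cnt r = j'}) + card (Cons False ` {r. length r = a \<and> cnt r = j})"
      by (rule card_Un_disjoint) (use fin in auto)
    also have "\<dots> = card {r::bool list. length r = a \<and> cnt r = j'} + card {r::bool list. length r = a \<and> cnt r = j}"
      by (simp add: card_image)
    also have "\<dots> = (a choose j') + (a choose j)" using Suc.IH by (simp add: id_def)
    finally show ?thesis using Suc by (simp add: id_def)
  qed
qed

lemma card_R:
  "card {r::bool list. length r = a + b \<and> cnt r = c \<and> sorted (drop a r)} = (\<Sum>j=c-b..c. a choose j)"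
proof -
  define S where "S j = {r1::bool list. length r1 = a \<and> cnt r1 = j}" for j
  define g where "g j r1 = r1 @ replicate (b - (c-j)) False @ replicate (c-j) True" for j and r1 :: "bool list"
  have finS: "finite (S j)" for j
    unfolding S_def
    by (rule finite_subset[OF _ fin_bl[of a]]) auto
  have eq: "{r::bool list. length r = a + b \<and> cnt r = c \<and> sorted (drop a r)} = (\<Union>j\<in>{c-b..c}. g j ` S j)"
  proof (intro set_eqI iffI)
    fix r :: "bool list" assume "r \<in> {r. length r = a + b \<and> cnt r = c \<and> sorted (drop a r)}"
    then have r: "length r = a + b" "cnt r = c" "sorted (drop a r)" by auto
    define j where "j = cnt (take a r)"
    define r2 where "r2 = drop a r"
    have c: "c = j + cnt r2" using r(2) unfolding j_def r2_def
      by (metis append_take_drop_id filter_append length_append)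
    have l2: "length r2 = b" using r(1) by (simp add: r2_def)
    have cr2: "cnt r2 \<le> b" using l2 by (metis length_filter_le)
    have r2e: "r2 = replicate (cntF r2) False @ replicate (cnt r2) True" using sorted_bool r(3) by (simp add: r2_def)
    have cF2: "cntF r2 = b - cnt r2" using cnt_split[of r2] l2 by simp
    have "r = take a r @ r2" by (simp add: r2_def)
    also have "\<dots> = g j (take a r)" unfolding g_def using r2e cF2 c by simp
    finally have "r = g j (take a r)" .
    moreover have "take a r \<in> S j" using r(1) by (simp add: S_def j_def)
    moreover have "j \<in> {c-b..c}" using c cr2 by auto
    ultimately show "r \<in> (\<Union>j\<in>{c-b..c}. g j ` S j)" by blast
  next
    fix r :: "bool list" assume "r \<in> (\<Union>j\<in>{c-b..c}. g j ` S j)"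
    then obtain j r1 where j: "c - b \<le> j" "j \<le> c" and r1: "length r1 = a" "cnt r1 = j" and r: "r = g j r1"
      unfolding S_def by auto
    have "c - j \<le> b" using j by linarith
    then have "length r = a + b" using r r1 by (simp add: g_def)
    moreover have "cnt r = c" using r r1 j by (simp add: g_def)
    moreover have "sorted (drop a r)" using r r1 by (simp add: g_def sorted_append)
    ultimately show "r \<in> {r. length r = a + b \<and> cnt r = c \<and> sorted (drop a r)}" by simp
  qed
  have tk: "take a (g j r1) = r1" if "r1 \<in> S j" for j r1 using that by (simp add: g_def S_def)
  have inj: "inj_on (g j) (S j)" for j by (rule inj_onI) (metis tk)
  have disj: "g i ` S i \<inter> g j ` S j = {}" if "i \<noteq> j" for i j
  proof (rule ccontr)
    assume "g i ` S i \<inter> g j ` S j \<noteq> {}"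
    then obtain r1 r1' where "r1 \<in> S i" "r1' \<in> S j" "g i r1 = g j r1'" by blast
    then have "r1 = r1'" using tk by metis
    then show False using \<open>r1 \<in> S i\<close> \<open>r1' \<in> S j\<close> that by (simp add: S_def)
  qed
  have "card {r::bool list. length r = a + b \<and> cnt r = c \<and> sorted (drop a r)} = (\<Sum>j\<in>{c-b..c}. card (g j ` S j))"
    unfolding eq by (rule card_UN_disjoint) (use finS disj in auto)
  also have "\<dots> = (\<Sum>j\<in>{c-b..c}. card (S j))" using card_image[OF inj] by simp
  also have "\<dots> = (\<Sum>j=c-b..c. a choose j)" unfolding S_def card_bl ..
  finally show ?thesis .
qed

lemma card_Rset:
  assumes "p < m" "m \<le> s*t"
  shows "card (Rset s t m p) = (\<Sum>j=(t-1)-(s*t-m)..t-1. (m-p-1) choose j)"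
proof -
  have "s*t - p - 1 = (m-p-1) + (s*t - m)" using assms by simp
  then have "Rset s t m p = {r::bool list. length r = (m-p-1) + (s*t - m) \<and> cnt r = t-1 \<and> sorted (drop (m-p-1) r)}"
    unfolding Rset_def by simp
  then show ?thesis using card_R by simp
qed

lemma E_low:
  assumes s: "1 \<le> s" and t: "2 \<le> t" and sig: "\<sigma> \<in> Eset s t m"
  shows "s \<le> m"
proof -
  define x0 where "x0 = (s-1)*t+1"
  have t1: "1 \<le> t" using t by simp
  have E: "\<sigma> \<in> lin_ext_combB s t" "x0 \<in> set (take m \<sigma>)" using sig unfolding Eset_def x0_def by blast+
  have dist: "distinct \<sigma>" and setS: "set \<sigma> = {1..s*t}"
    and linS: "\<forall>x y. Rl s t x y \<longrightarrow> x \<in> set \<sigma> \<longrightarrow> y \<in> set \<sigma> \<longrightarrow> bef \<sigma> x y"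
    using E(1) lin_ext_iff[OF t1] by blast+
  have stN: "s * t = (s-1)*t + t" using s st_eq by simp
  have x0le: "x0 \<le> s*t" using stN t1 unfolding x0_def by linarith
  have sub: "(\<lambda>j. j*t+1) ` {..<s} \<subseteq> set (take m \<sigma>)"
  proof
    fix x assume "x \<in> (\<lambda>j. j*t+1) ` {..<s}"
    then obtain j where j: "j < s" "x = j*t+1" by blast
    show "x \<in> set (take m \<sigma>)"
    proof (cases "j = s - 1")
      case True then show ?thesis using E(2) j by (simp add: x0_def)
    next
      case False
      then have js: "j < s - 1" using j by simp
      then have "j * t < (s-1) * t" using t1 by simp
      then have xl: "x < x0" using j unfolding x0_def by simp
      have "Rl s t x x0" using xl x0le j by (simp add: Rl_def)
      moreover have "x \<in> set \<sigma>" "x0 \<in> set \<sigma>" using xl x0le j setS by auto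
      ultimately have "bef \<sigma> x x0" using linS by blast
      then show ?thesis using bef_take[OF dist _ E(2)] by blast
    qed
  qed
  have "inj_on (\<lambda>j. j*t+1) {..<s}" using t1 by (intro inj_onI) simp
  then have "card ((\<lambda>j. j*t+1) ` {..<s}) = s" by (simp add: card_image)
  moreover have "card ((\<lambda>j. j*t+1) ` {..<s}) \<le> card (set (take m \<sigma>))" by (rule card_mono) (use sub in auto)
  moreover have "card (set (take m \<sigma>)) \<le> m" by (metis card_length length_take min.bounded_iff nle_le)
  ultimately show ?thesis by linarith
qed

lemma E_one:
  assumes t: "2 \<le> t" and m: "1 \<le> m"
  shows "Eset 1 t m = {[1..<t+1]}"
proof -
  have t1: "1 \<le> t" using t by simp
  have R: "Rl 1 t x y" if "1 \<le> x" "x < y" "y \<le> t" for x y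
  proof -
    have "(x-1) div t = 0" "(y-1) div t = 0" using that by auto
    then show ?thesis using that by (simp add: Rl_def)
  qed
  show ?thesis
  proof (intro equalityI subsetI)
    fix \<sigma> assume sig: "\<sigma> \<in> Eset 1 t m"
    then have "\<sigma> \<in> lin_ext_combB 1 t" by (simp add: Eset_def)
    then have dist: "distinct \<sigma>" and setS: "set \<sigma> = {1..t}"
      and linS: "\<forall>x y. Rl 1 t x y \<longrightarrow> x \<in> set \<sigma> \<longrightarrow> y \<in> set \<sigma> \<longrightarrow> bef \<sigma> x y"
      using lin_ext_iff[OF t1, of \<sigma> 1] by auto
    have "sorted_wrt (<) \<sigma>"
    proof (rule bef_imp_sorted)
      fix x y assume b: "bef \<sigma> x y"
      have xy: "x \<in> set \<sigma>" "y \<in> set \<sigma>" using bef_set[OF b] by auto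
      show "x < y"
      proof (rule ccontr)
        assume "\<not> x < y"
        moreover have "x \<noteq> y" using b bef_irrefl[OF dist] by metis
        ultimately have "y < x" by simp
        moreover have "1 \<le> y" "x \<le> t" using xy setS by auto
        ultimately have "Rl 1 t y x" using R by blast
        then have "bef \<sigma> y x" using linS xy by blast
        then show False using bef_asym[OF dist b] by blast
      qed
    qed
    then have so: "sorted \<sigma>" "distinct \<sigma>" using strict_sorted_iff by blast+
    have "set [1..<t+1] = {1..t}" by auto
    then have "set \<sigma> = set [1..<t+1]" using setS by simp
    then have "\<sigma> = [1..<t+1]"
      by (rule sorted_distinct_set_unique[OF so sorted_upt distinct_upt])
    then show "\<sigma> \<in> {[1..<t+1]}" by simp
  next
    fix \<sigma> assume "\<sigma> \<in> {[1..<t+1]}"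
    then have s: "\<sigma> = [1..<t+1]" by simp
    have so: "sorted_wrt (<) \<sigma>" unfolding s by (rule sorted_wrt_upt)
    have dist: "distinct \<sigma>" using so strict_sorted_iff by blast
    have setS: "set \<sigma> = {1..1*t}" unfolding s by auto
    have lin: "\<forall>x y. Rl 1 t x y \<longrightarrow> x \<in> set \<sigma> \<longrightarrow> y \<in> set \<sigma> \<longrightarrow> bef \<sigma> x y"
      using sorted_bef[OF so] by (auto simp: Rl_def)
    have "\<sigma> \<in> lin_ext_combB 1 t" using lin_ext_iff[OF t1] dist setS lin by blast
    moreover have "avoids_321 \<sigma>" using avoids_iff[OF dist] bef_sorted_less[OF so] by fastforce
    moreover have "(1-1)*t+1 \<in> set (take m \<sigma>)"
    proof -
      have l: "0 < length (take m \<sigma>)" using m t1 unfolding s by (simp; linarith)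
      have "take m \<sigma> ! 0 = 1" using m t1 unfolding s by (subst nth_take) (auto simp del: upt_Suc)
      then have "1 \<in> set (take m \<sigma>)" using l by (metis nth_mem)
      then show ?thesis by simp
    qed
    moreover have "sorted (drop m \<sigma>)" using strict_sorted_imp_sorted[OF so] by (rule sorted_wrt_drop)
    ultimately show "\<sigma> \<in> Eset 1 t m" unfolding Eset_def by blast
  qed
qed

lemma F_zero:
  assumes "2 \<le> s" "k < s \<or> (s-1)*t+1 < k"
  shows "F s t k = 0"
proof -
  obtain n where n: "s = Suc (Suc n)" using assms(1) by (metis add_2_eq_Suc le_Suc_ex)
  show ?thesis
  proof (cases n)
    case 0 then show ?thesis using assms n by auto
  next
    case (Suc n')
    have "\<not> (n' + 3 \<le> k \<and> k \<le> (n' + 3 - 1) * t + 1)" using assms n Suc by auto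
    then show ?thesis using n Suc by (simp only: F.simps Let_def if_False)
  qed
qed

lemma L_eq:
  fixes k M t :: nat
  assumes "1 \<le> k" "k \<le> M + t + 1"
  shows "nat (max 0 (int k - int M - 2)) = (t-1) - (M + t - (k-1))"
  using assms by arith

lemma Frel:
  assumes t: "2 \<le> t"
  shows "Suc (Suc n) \<le> k \<Longrightarrow> k \<le> Suc n * t + 1 \<Longrightarrow> F (Suc (Suc n)) t k = card (Eset (Suc n) t (k-1))"
proof (induction n arbitrary: k)
  case 0
  then have "Eset 1 t (k-1) = {[1..<t+1]}" using E_one[OF t] by simp
  then show ?case using 0 by simp
next
  case (Suc n)
  define s0 where "s0 = Suc (Suc n)"
  have s0: "2 \<le> s0" by (simp add: s0_def)
  define M where "M = Suc n * t"
  have s0t: "s0 * t = M + t" by (simp add: s0_def M_def)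
  define L where "L = nat (max 0 (int k - int M - 2))"
  have k1: "1 \<le> k" using Suc.prems by simp
  have kM: "k \<le> M + t + 1" using Suc.prems s0t by (simp add: s0_def M_def)
  have Lq: "L = (t-1) - (s0*t - (k-1))" unfolding L_def s0t using L_eq[OF k1 kM] .
  have Fk: "F (Suc (Suc (Suc n))) t k = (\<Sum>i = s0..k-1. F s0 t i * (\<Sum>j = L..t-1. (k - i - 1) choose j))"
    using Suc.prems by (simp add: Let_def s0_def L_def M_def)
  define h where "h i = card (Eset (Suc n) t (i-1)) * (\<Sum>j = L..t-1. (k - i - 1) choose j)" for i
  have "card (Eset s0 t (k-1)) = (\<Sum>p<k-1. card (Eset (s0-1) t p) * card (Rset s0 t (k-1) p))"
    by (rule card_rec[OF s0 t])
  also have "\<dots> = (\<Sum>p<k-1. h (Suc p))"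
  proof (rule sum.cong[OF refl])
    fix p assume "p \<in> {..<k-1}"
    then have pk: "p < k - 1" by simp
    have "k - 1 \<le> s0 * t" using kM s0t by simp
    then have "card (Rset s0 t (k-1) p) = (\<Sum>j=(t-1)-(s0*t-(k-1))..t-1. (k-1-p-1) choose j)"
      using card_Rset[OF pk] by simp
    also have "\<dots> = (\<Sum>j = L..t-1. (k - Suc p - 1) choose j)" unfolding Lq
      by (rule sum.cong[OF refl]) simp
    finally show "card (Eset (s0-1) t p) * card (Rset s0 t (k-1) p) = h (Suc p)"
      by (simp add: h_def s0_def)
  qed
  also have "\<dots> = (\<Sum>i\<in>{1..<k}. h i)"
  proof -
    have "(\<Sum>i\<in>{Suc 0..<Suc (k-1)}. h i) = (\<Sum>p\<in>{0..<k-1}. h (Suc p))" by (rule sum.shift_bounds_Suc_ivl)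
    moreover have "Suc (k-1) = k" using k1 by simp
    ultimately show ?thesis by (simp add: atLeast0LessThan)
  qed
  also have "\<dots> = (\<Sum>i = s0..k-1. F s0 t i * (\<Sum>j = L..t-1. (k - i - 1) choose j))"
  proof (rule sum.mono_neutral_cong_right)
    show "finite {1..<k}" by simp
    show "{s0..k-1} \<subseteq> {1..<k}" using s0 k1 by auto
    show "\<forall>i\<in>{1..<k} - {s0..k-1}. h i = 0"
    proof
      fix i assume "i \<in> {1..<k} - {s0..k-1}"
      then have i: "1 \<le> i" "i < s0" by auto
      have "Eset (Suc n) t (i-1) = {}"
      proof (rule ccontr)
        assume "Eset (Suc n) t (i-1) \<noteq> {}"
        then obtain \<sigma> where "\<sigma> \<in> Eset (Suc n) t (i-1)" by blast
        then have "Suc n \<le> i - 1" using E_low[OF _ t] by simp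
        then show False using i by (simp add: s0_def)
      qed
      then show "h i = 0" by (simp add: h_def)
    qed
    show "h i = F s0 t i * (\<Sum>j = L..t-1. (k - i - 1) choose j)" if "i \<in> {s0..k-1}" for i
    proof (cases "i \<le> Suc n * t + 1")
      case True
      have "F s0 t i = card (Eset (Suc n) t (i-1))" using Suc.IH[of i] that True by (simp add: s0_def)
      then show ?thesis by (simp add: h_def)
    next
      case False
      have "F s0 t i = 0" by (rule F_zero) (use s0 False in \<open>simp_all add: s0_def\<close>)
      moreover have "(\<Sum>j = L..t-1. (k - i - 1) choose j) = 0"
      proof (rule sum.neutral, rule ballI)
        fix j assume "j \<in> {L..t-1}"
        then have "L \<le> j" by simp
        moreover have "k - i - 1 < L"
        proof -
          have i1: "M + 1 < i" "i \<le> k - 1" using False that by (auto simp: M_def)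
          have "L = k - M - 2" unfolding L_def using i1 by arith
          then show ?thesis using i1 by linarith
        qed
        ultimately show "(k - i - 1) choose j = 0" by simp
      qed
      ultimately show ?thesis by (simp add: h_def)
    qed
  qed
  finally show ?case using Fk by (simp add: s0_def)
qed

theorem theorem5:
  fixes s t :: nat
  assumes "s \<ge> 2" and "t \<ge> 2"
  shows "A321_combB s t = (\<Sum>k = s..(s - 1) * t + 1. ((s * t - k) choose (t - 1)) * F s t k)"
proof -
  have s: "2 \<le> s" and t: "2 \<le> t" using assms by auto
  have t1: "1 \<le> t" using t by simp
  have stN: "s * t = (s-1)*t + t" using s st_eq by simp
  have eqA: "{\<sigma> \<in> lin_ext_combB s t. avoids_321 \<sigma>} = Eset s t (s*t)"
  proof (intro equalityI subsetI)
    fix \<sigma> assume h: "\<sigma> \<in> {\<sigma> \<in> lin_ext_combB s t. avoids_321 \<sigma>}"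
    then have l: "\<sigma> \<in> lin_ext_combB s t" "avoids_321 \<sigma>" by auto
    then have d: "distinct \<sigma>" "set \<sigma> = {1..s*t}" using lin_ext_iff[OF t1] by blast+
    then have len: "length \<sigma> = s*t" using distinct_card by fastforce
    have "(s-1)*t+1 \<in> set \<sigma>" using d stN t by auto
    then show "\<sigma> \<in> Eset s t (s*t)" using l len by (simp add: Eset_def)
  next
    fix \<sigma> assume "\<sigma> \<in> Eset s t (s*t)"
    then show "\<sigma> \<in> {\<sigma> \<in> lin_ext_combB s t. avoids_321 \<sigma>}" by (simp add: Eset_def)
  qed
  define g where "g k = card (Eset (s-1) t (k-1)) * ((s*t - k) choose (t-1))" for k
  have "A321_combB s t = card (Eset s t (s*t))" unfolding A321_combB_def eqA ..
  also have "\<dots> = (\<Sum>p<s*t. card (Eset (s-1) t p) * card (Rset s t (s*t) p))"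
    by (rule card_rec[OF s t])
  also have "\<dots> = (\<Sum>p<s*t. g (Suc p))"
  proof (rule sum.cong[OF refl])
    fix p assume "p \<in> {..<s*t}"
    then have p: "p < s*t" by simp
    have "card (Rset s t (s*t) p) = (\<Sum>j=(t-1)-(s*t-s*t)..t-1. (s*t-p-1) choose j)"
      using card_Rset[OF p] by simp
    also have "\<dots> = (s*t - Suc p) choose (t-1)" by simp
    finally show "card (Eset (s-1) t p) * card (Rset s t (s*t) p) = g (Suc p)" by (simp add: g_def)
  qed
  also have "\<dots> = (\<Sum>k\<in>{1..<s*t+1}. g k)"
  proof -
    have "(\<Sum>i\<in>{Suc 0..<Suc (s*t)}. g i) = (\<Sum>p\<in>{0..<s*t}. g (Suc p))" by (rule sum.shift_bounds_Suc_ivl)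
    then show ?thesis by (simp add: atLeast0LessThan)
  qed
  also have "\<dots> = (\<Sum>k = s..(s - 1) * t + 1. ((s * t - k) choose (t - 1)) * F s t k)"
  proof (rule sum.mono_neutral_cong_right)
    show "finite {1..<s*t+1}" by simp
    show "{s..(s-1)*t+1} \<subseteq> {1..<s*t+1}" using s stN t by auto
    show "\<forall>k\<in>{1..<s*t+1} - {s..(s-1)*t+1}. g k = 0"
    proof
      fix k assume k: "k \<in> {1..<s*t+1} - {s..(s-1)*t+1}"
      then consider "k < s" | "(s-1)*t+1 < k" "k \<le> s*t" by auto
      then show "g k = 0"
      proof cases
        case 1
        have "Eset (s-1) t (k-1) = {}"
        proof (rule ccontr)
          assume "Eset (s-1) t (k-1) \<noteq> {}"
          then obtain \<sigma> where "\<sigma> \<in> Eset (s-1) t (k-1)" by blast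
          then have "s - 1 \<le> k - 1" using E_low[OF _ t] s by simp
          then show False using 1 k by auto
        qed
        then show ?thesis by (simp add: g_def)
      next
        case 2
        then have "s*t - k < t - 1" using stN by linarith
        then show ?thesis by (simp add: g_def)
      qed
    qed
    show "g k = ((s * t - k) choose (t - 1)) * F s t k" if "k \<in> {s..(s-1)*t+1}" for k
    proof -
      obtain n where n: "s = Suc (Suc n)" using s by (metis add_2_eq_Suc le_Suc_ex)
      have "F s t k = card (Eset (s-1) t (k-1))"
        using Frel[OF t, of n k] that n by simp
      then show ?thesis by (simp add: g_def)
    qed
  qed
  finally show ?thesis .
qed
end
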